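(* Let $R_1,R_2,S_1,S_2\in\mathfrak{P}$. If $R_1\sqsubseteq_\Gamma S_1$ and $R_2\sqsubseteq_\Gamma S_2$ with respect to $\mathfrak{P}$, then $R_1\oplus R_2\sqsubseteq_\Gamma S_1\oplus S_2$ with respect to $\mathfrak{P}$. Here $\oplus$ denotes the ordinal sum of posets, in which every element of the first summand is placed below every element of the second.
   Context: **Digraphs and homomorphisms.** - A digraph $G$ is a pair $(V(G),A(G))$, where $V(G)$ is a finite non-empty set and $A(G)\subseteq V(G)\times V(G)$. Arcs are written $vw$. - $\mathfrak{P}$ is the class of finite posets, i.e. reflexive, antisymmetric, transitive digraphs. - A homomorphism $\xi:G\to H$ is a map $V(G)\to V(H)$ with $\xi(v)\xi(w)\in A(H)$ for all $vw\in A(G)$. $\mathcal{H}(G,H)$ is the set of homomorphisms. **Connectivity.** - Two vertices $u,w$ are adjacent if $uw\in A(G)$ or $wu\in A(G)$. - For $X\subseteq V(G)$ and $v,w\in X$, the vertices $v$ and $w$ are connected in $X$ if $v=w$, or if there are $z_0=v,\dots,z_I=w$ in $X$ with consecutive terms adjacent. - $\gamma_X(v)$ is the set of such $w$. - $\Gamma_\xi(v)=\gamma_{\xi^{-1}(\xi(v))}(v)$. **Schemes.** - $\mathfrak{P}_r$ is a fixed system of representatives of $\mathfrak{P}$ up to isomorphism. - $R\sqsubseteq_\Gamma S$ with respect to $\mathfrak{P}$ means there exist injective maps $\rho_G:\mathcal{H}(G,R)\to\mathcal{H}(G,S)$, $G\in\mathfrak{P}_r$, with $\Gamma_{\rho_G(\xi)}(v)=\Gamma_\xi(v)$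 for all $G\in\mathfrak{P}_r$, $\xi\in\mathcal{H}(G,R)$ and $v\in V(G)$. *)

theory Defs
  imports "HOL-Library.FuncSet"
begin

type_synonym 'a digraph = "'a set \<times> ('a \<times> 'a) set"

definition verts :: "'a digraph \<Rightarrow> 'a set" where "verts G = fst G"
definition arcs :: "'a digraph \<Rightarrow> ('a \<times> 'a) set" where "arcs G = snd G"

definition is_digraph :: "'a digraph \<Rightarrow> bool" where
  "is_digraph G \<longleftrightarrow> finite (verts G) \<and> verts G \<noteq> {} \<and> arcs G \<subseteq> verts G \<times> verts G"

definition is_poset :: "'a digraph \<Rightarrow> bool" where
  "is_poset G \<longleftrightarrow> is_digraph G
     \<and> (\<forall>v\<in>verts G. (v, v) \<in> arcs G)
     \<and> (\<forall>v w. (v, w) \<in> arcs G \<and> (w, v) \<in> arcs G \<longrightarrow> v = w)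
     \<and> (\<forall>u v w. (u, v) \<in> arcs G \<and> (v, w) \<in> arcs G \<longrightarrow> (u, w) \<in> arcs G)"

definition homs :: "'a digraph \<Rightarrow> 'b digraph \<Rightarrow> ('a \<Rightarrow> 'b) set" where
  "homs G H = {\<xi> \<in> verts G \<rightarrow>\<^sub>E verts H. \<forall>(v, w) \<in> arcs G. (\<xi> v, \<xi> w) \<in> arcs H}"

definition adj :: "'a digraph \<Rightarrow> ('a \<times> 'a) set" where
  "adj G = arcs G \<union> (arcs G)\<inverse>"

definition gamma :: "'a digraph \<Rightarrow> 'a set \<Rightarrow> 'a \<Rightarrow> 'a set" where
  "gamma G X v = {w \<in> X. v \<in> X \<and> (v, w) \<in> (adj G \<inter> (X \<times> X))\<^sup>*}"

definition Gamma :: "'a digraph \<Rightarrow> ('a \<Rightarrow> 'b) \<Rightarrow> 'a \<Rightarrow> 'a set" where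
  "Gamma G \<xi> v = gamma G {u \<in> verts G. \<xi> u = \<xi> v} v"

text \<open>Every finite poset
  is isomorphic to one on a subset of nat, so the posets on nat contain a system of
  representatives; since the maps \<rho>_G are chosen independently for each G and the condition
  is invariant under isomorphism of G, quantifying over all posets on nat is equivalent.\<close>
definition scheme_le :: "'a digraph \<Rightarrow> 'b digraph \<Rightarrow> bool" where
  "scheme_le R S \<longleftrightarrow>
     (\<forall>G :: nat digraph. is_poset G \<longrightarrow>
        (\<exists>\<rho>. inj_on \<rho> (homs G R) \<and> \<rho> ` homs G R \<subseteq> homs G S
             \<and> (\<forall>\<xi>\<in>homs G R. \<forall>v\<in>verts G. Gamma G (\<rho> \<xi>) v = Gamma G \<xi> v)))"

definition ordinal_sum :: "'a digraph \<Rightarrow> 'b digraph \<Rightarrow> ('a + 'b) digraph" where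
  "ordinal_sum P Q =
     (Inl ` verts P \<union> Inr ` verts Q,
      (map_prod Inl Inl ` arcs P) \<union> (map_prod Inr Inr ` arcs Q)
        \<union> {(Inl x, Inr y) | x y. x \<in> verts P \<and> y \<in> verts Q})"

end

theory Submission
  imports Defs
begin

definition sub :: "'a digraph \<Rightarrow> 'a set \<Rightarrow> 'a digraph" where
  "sub G X = (X, arcs G \<inter> X \<times> X)"

lemma verts_sub[simp]: "verts (sub G X) = X" by (simp add: sub_def verts_def)
lemma arcs_sub[simp]: "arcs (sub G X) = arcs G \<inter> X \<times> X" by (simp add: sub_def arcs_def)

lemma verts_os: "verts (ordinal_sum P Q) = Inl ` verts P \<union> Inr ` verts Q"
  by (simp add: ordinal_sum_def verts_def)
lemma arcs_os1[simp]: "(Inl a, Inl b) \<in> arcs (ordinal_sum P Q) \<longleftrightarrow> (a,b) \<in> arcs P"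
  by (auto simp: ordinal_sum_def arcs_def)
lemma arcs_os2[simp]: "(Inr a, Inr b) \<in> arcs (ordinal_sum P Q) \<longleftrightarrow> (a,b) \<in> arcs Q"
  by (auto simp: ordinal_sum_def arcs_def)
lemma arcs_os3[simp]: "(Inl a, Inr b) \<in> arcs (ordinal_sum P Q) \<longleftrightarrow> a \<in> verts P \<and> b \<in> verts Q"
  by (auto simp: ordinal_sum_def arcs_def)
lemma arcs_os4[simp]: "(Inr a, Inl b) \<notin> arcs (ordinal_sum P Q)"
  by (auto simp: ordinal_sum_def arcs_def)

lemma homsD1: "\<xi> \<in> homs G H \<Longrightarrow> u \<in> verts G \<Longrightarrow> \<xi> u \<in> verts H"
  by (auto simp: homs_def)
lemma homsD2: "\<xi> \<in> homs G H \<Longrightarrow> (u,w) \<in> arcs G \<Longrightarrow> (\<xi> u, \<xi> w) \<in> arcs H"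
  by (auto simp: homs_def)
lemma homsD3: "\<xi> \<in> homs G H \<Longrightarrow> u \<notin> verts G \<Longrightarrow> \<xi> u = undefined"
  by (auto simp: homs_def)

lemma sub_poset: "is_poset G \<Longrightarrow> X \<subseteq> verts G \<Longrightarrow> X \<noteq> {} \<Longrightarrow> is_poset (sub G X)"
proof -
  assume G: "is_poset G" and X: "X \<subseteq> verts G" "X \<noteq> {}"
  have fin: "finite (verts G)" and refl: "\<forall>v\<in>verts G. (v, v) \<in> arcs G"
    and anti: "\<forall>v w. (v, w) \<in> arcs G \<and> (w, v) \<in> arcs G \<longrightarrow> v = w"
    and tr: "\<forall>u v w. (u, v) \<in> arcs G \<and> (v, w) \<in> arcs G \<longrightarrow> (u, w) \<in> arcs G"
    using G unfolding is_poset_def is_digraph_def by blast+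
  have "finite X" using finite_subset[OF X(1) fin] .
  moreover have "\<forall>v\<in>X. (v, v) \<in> arcs (sub G X)" using refl X(1) by auto
  moreover have "\<forall>v w. (v, w) \<in> arcs (sub G X) \<and> (w, v) \<in> arcs (sub G X) \<longrightarrow> v = w"
    unfolding arcs_sub using anti by blast
  moreover have "\<forall>u v w. (u, v) \<in> arcs (sub G X) \<and> (v, w) \<in> arcs (sub G X) \<longrightarrow> (u, w) \<in> arcs (sub G X)"
    unfolding arcs_sub using tr by blast
  moreover have "arcs (sub G X) \<subseteq> X \<times> X" by simp
  ultimately show ?thesis using X(2) unfolding is_poset_def is_digraph_def verts_sub by blast
qed

lemma gamma_sub: "X \<subseteq> V \<Longrightarrow> gamma (sub G V) X v = gamma G X v"
proof -
  assume "X \<subseteq> V"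
  then have "adj (sub G V) \<inter> X \<times> X = adj G \<inter> X \<times> X"
    by (auto simp: adj_def)
  then show ?thesis by (simp add: gamma_def)
qed

theorem corollary8:
  fixes R1 :: "'a digraph" and S1 :: "'c digraph"
    and R2 :: "'b digraph" and S2 :: "'d digraph"
  assumes "is_poset R1" and "is_poset R2" and "is_poset S1" and "is_poset S2"
    and "scheme_le R1 S1" and "scheme_le R2 S2"
  shows "scheme_le (ordinal_sum R1 R2) (ordinal_sum S1 S2)"
proof -
  define F1 where "F1 G = (SOME \<rho>. inj_on \<rho> (homs G R1) \<and> \<rho> ` homs G R1 \<subseteq> homs G S1
             \<and> (\<forall>\<xi>\<in>homs G R1. \<forall>v\<in>verts G. Gamma G (\<rho> \<xi>) v = Gamma G \<xi> v))" for G :: "nat digraph"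
  have F1: "inj_on (F1 G) (homs G R1) \<and> (F1 G) ` homs G R1 \<subseteq> homs G S1
             \<and> (\<forall>\<xi>\<in>homs G R1. \<forall>v\<in>verts G. Gamma G (F1 G \<xi>) v = Gamma G \<xi> v)" if "is_poset G" for G
  proof -
    have "\<exists>\<rho>. inj_on \<rho> (homs G R1) \<and> \<rho> ` homs G R1 \<subseteq> homs G S1
             \<and> (\<forall>\<xi>\<in>homs G R1. \<forall>v\<in>verts G. Gamma G (\<rho> \<xi>) v = Gamma G \<xi> v)" using mp[OF spec[OF assms(5)[unfolded scheme_le_def], of G] that] .
    then show ?thesis unfolding F1_def by (rule someI_ex)
  qed
  have F1inj: "inj_on (F1 G) (homs G R1)" if "is_poset G" for G using F1[OF that] by (rule conjunct1)
  have F1h: "F1 G \<xi> \<in> homs G S1" if "is_poset G" "\<xi> \<in> homs G R1" for G \<xi>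
    by (rule subsetD[OF conjunct1[OF conjunct2[OF F1[OF that(1)]]] imageI[OF that(2)]])
  have F1g: "Gamma G (F1 G \<xi>) v = Gamma G \<xi> v" if "is_poset G" "\<xi> \<in> homs G R1" "v \<in> verts G" for G \<xi> v
    using conjunct2[OF conjunct2[OF F1[OF that(1)]]] that(2,3) by simp
  define F2 where "F2 G = (SOME \<rho>. inj_on \<rho> (homs G R2) \<and> \<rho> ` homs G R2 \<subseteq> homs G S2
             \<and> (\<forall>\<xi>\<in>homs G R2. \<forall>v\<in>verts G. Gamma G (\<rho> \<xi>) v = Gamma G \<xi> v))" for G :: "nat digraph"
  have F2: "inj_on (F2 G) (homs G R2) \<and> (F2 G) ` homs G R2 \<subseteq> homs G S2
             \<and> (\<forall>\<xi>\<in>homs G R2. \<forall>v\<in>verts G. Gamma G (F2 G \<xi>) v = Gamma G \<xi> v)" if "is_poset G" for G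
  proof -
    have "\<exists>\<rho>. inj_on \<rho> (homs G R2) \<and> \<rho> ` homs G R2 \<subseteq> homs G S2
             \<and> (\<forall>\<xi>\<in>homs G R2. \<forall>v\<in>verts G. Gamma G (\<rho> \<xi>) v = Gamma G \<xi> v)" using mp[OF spec[OF assms(6)[unfolded scheme_le_def], of G] that] .
    then show ?thesis unfolding F2_def by (rule someI_ex)
  qed
  have F2inj: "inj_on (F2 G) (homs G R2)" if "is_poset G" for G using F2[OF that] by (rule conjunct1)
  have F2h: "F2 G \<xi> \<in> homs G S2" if "is_poset G" "\<xi> \<in> homs G R2" for G \<xi>
    by (rule subsetD[OF conjunct1[OF conjunct2[OF F2[OF that(1)]]] imageI[OF that(2)]])
  have F2g: "Gamma G (F2 G \<xi>) v = Gamma G \<xi> v" if "is_poset G" "\<xi> \<in> homs G R2" "v \<in> verts G" for G \<xi> v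
    using conjunct2[OF conjunct2[OF F2[OF that(1)]]] that(2,3) by simp
  show ?thesis unfolding scheme_le_def
  proof (intro allI impI)
    fix G :: "nat digraph"
    assume G: "is_poset G"
    have arcsG: "arcs G \<subseteq> verts G \<times> verts G" using G by (simp add: is_poset_def is_digraph_def)
    let ?P = "ordinal_sum R1 R2" and ?Q = "ordinal_sum S1 S2"
    define V1 where "V1 \<xi> = {u \<in> verts G. isl (\<xi> u)}" for \<xi> :: "nat \<Rightarrow> 'a + 'b"
    define V2 where "V2 \<xi> = {u \<in> verts G. \<not> isl (\<xi> u)}" for \<xi> :: "nat \<Rightarrow> 'a + 'b"
    define x1 where "x1 \<xi> = restrict (\<lambda>u. projl (\<xi> u)) (V1 \<xi>)" for \<xi> :: "nat \<Rightarrow> 'a + 'b"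
    define x2 where "x2 \<xi> = restrict (\<lambda>u. projr (\<xi> u)) (V2 \<xi>)" for \<xi> :: "nat \<Rightarrow> 'a + 'b"
    define g1 where "g1 \<xi> = F1 (sub G (V1 \<xi>)) (x1 \<xi>)" for \<xi>
    define g2 where "g2 \<xi> = F2 (sub G (V2 \<xi>)) (x2 \<xi>)" for \<xi>
    define r where "r \<xi> = restrict (\<lambda>u. if isl (\<xi> u) then Inl (g1 \<xi> u) else Inr (g2 \<xi> u)) (verts G)" for \<xi>
    have V1sub: "V1 \<xi> \<subseteq> verts G" and V2sub: "V2 \<xi> \<subseteq> verts G" for \<xi>
      by (auto simp: V1_def V2_def)
    have c1: "\<xi> u = Inl (x1 \<xi> u)" if "u \<in> V1 \<xi>" for \<xi> u
      using that by (auto simp: x1_def V1_def)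
    have c2: "\<xi> u = Inr (x2 \<xi> u)" if "u \<in> V2 \<xi>" for \<xi> u
      using that by (auto simp: x2_def V2_def)
    have x1h: "x1 \<xi> \<in> homs (sub G (V1 \<xi>)) R1" if "\<xi> \<in> homs G ?P" for \<xi>
    proof -
      have "x1 \<xi> u \<in> verts R1" if "u \<in> V1 \<xi>" for u
        using homsD1[OF \<open>\<xi> \<in> homs G ?P\<close>, of u] c1[OF that] that V1sub
        by (auto simp: verts_os)
      moreover have "(x1 \<xi> u, x1 \<xi> w) \<in> arcs R1" if "(u,w) \<in> arcs G" "u \<in> V1 \<xi>" "w \<in> V1 \<xi>" for u w
        using homsD2[OF \<open>\<xi> \<in> homs G ?P\<close> that(1)] c1[OF that(2)] c1[OF that(3)] by simp
      ultimately show ?thesis by (auto simp: homs_def x1_def)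
    qed
    have x2h: "x2 \<xi> \<in> homs (sub G (V2 \<xi>)) R2" if "\<xi> \<in> homs G ?P" for \<xi>
    proof -
      have "x2 \<xi> u \<in> verts R2" if "u \<in> V2 \<xi>" for u
        using homsD1[OF \<open>\<xi> \<in> homs G ?P\<close>, of u] c2[OF that] that V2sub
        by (auto simp: verts_os)
      moreover have "(x2 \<xi> u, x2 \<xi> w) \<in> arcs R2" if "(u,w) \<in> arcs G" "u \<in> V2 \<xi>" "w \<in> V2 \<xi>" for u w
        using homsD2[OF \<open>\<xi> \<in> homs G ?P\<close> that(1)] c2[OF that(2)] c2[OF that(3)] by simp
      ultimately show ?thesis by (auto simp: homs_def x2_def)
    qed
    have P1: "is_poset (sub G (V1 \<xi>))" if "V1 \<xi> \<noteq> {}" for \<xi>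
      using sub_poset[OF G V1sub that] .
    have P2: "is_poset (sub G (V2 \<xi>))" if "V2 \<xi> \<noteq> {}" for \<xi>
      using sub_poset[OF G V2sub that] .
    have g1h: "g1 \<xi> \<in> homs (sub G (V1 \<xi>)) S1" if "\<xi> \<in> homs G ?P" "V1 \<xi> \<noteq> {}" for \<xi>
      unfolding g1_def by (rule F1h[OF P1[OF that(2)] x1h[OF that(1)]])
    have g2h: "g2 \<xi> \<in> homs (sub G (V2 \<xi>)) S2" if "\<xi> \<in> homs G ?P" "V2 \<xi> \<noteq> {}" for \<xi>
      unfolding g2_def by (rule F2h[OF P2[OF that(2)] x2h[OF that(1)]])
    have rh: "r \<xi> \<in> homs G ?Q" if xi: "\<xi> \<in> homs G ?P" for \<xi>
    proof -
      have "r \<xi> u \<in> verts ?Q" if u: "u \<in> verts G" for u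
      proof (cases "isl (\<xi> u)")
        case True
        then have "u \<in> V1 \<xi>" using u by (simp add: V1_def)
        then show ?thesis using homsD1[OF g1h[OF xi], of u] True u by (auto simp: r_def verts_os)
      next
        case False
        then have "u \<in> V2 \<xi>" using u by (simp add: V2_def)
        then show ?thesis using homsD1[OF g2h[OF xi], of u] False u by (auto simp: r_def verts_os)
      qed
      moreover have "(r \<xi> u, r \<xi> w) \<in> arcs ?Q" if uw: "(u,w) \<in> arcs G" for u w
      proof -
        have u: "u \<in> verts G" and w: "w \<in> verts G" using uw arcsG by auto
        have a: "(\<xi> u, \<xi> w) \<in> arcs ?P" using homsD2[OF xi uw] .
        show ?thesis
        proof (cases "isl (\<xi> u)"; cases "isl (\<xi> w)")
          assume 1: "isl (\<xi> u)" and 2: "isl (\<xi> w)"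
          then have "u \<in> V1 \<xi>" "w \<in> V1 \<xi>" using u w by (auto simp: V1_def)
          then show ?thesis using homsD2[OF g1h[OF xi], of u w] uw 1 2 u w by (auto simp: r_def)
        next
          assume 1: "isl (\<xi> u)" and 2: "\<not> isl (\<xi> w)"
          then have "u \<in> V1 \<xi>" "w \<in> V2 \<xi>" using u w by (auto simp: V1_def V2_def)
          then show ?thesis using homsD1[OF g1h[OF xi], of u] homsD1[OF g2h[OF xi], of w] 1 2 u w
            by (auto simp: r_def)
        next
          assume 1: "\<not> isl (\<xi> u)" and 2: "isl (\<xi> w)"
          then have "u \<in> V2 \<xi>" "w \<in> V1 \<xi>" using u w by (auto simp: V1_def V2_def)
          then have "\<xi> u = Inr (x2 \<xi> u)" "\<xi> w = Inl (x1 \<xi> w)" using c1 c2 by auto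
          then show ?thesis using a by simp
        next
          assume 1: "\<not> isl (\<xi> u)" and 2: "\<not> isl (\<xi> w)"
          then have "u \<in> V2 \<xi>" "w \<in> V2 \<xi>" using u w by (auto simp: V2_def)
          then show ?thesis using homsD2[OF g2h[OF xi], of u w] uw 1 2 u w by (auto simp: r_def)
        qed
      qed
      moreover have "r \<xi> u = undefined" if "u \<notin> verts G" for u using that by (simp add: r_def)
      ultimately show ?thesis unfolding homs_def by (auto intro!: PiE_I)
    qed
    show "\<exists>\<rho>. inj_on \<rho> (homs G ?P) \<and> \<rho> ` homs G ?P \<subseteq> homs G ?Q
             \<and> (\<forall>\<xi>\<in>homs G ?P. \<forall>v\<in>verts G. Gamma G (\<rho> \<xi>) v = Gamma G \<xi> v)"
    proof (intro exI conjI)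
      show "r ` homs G ?P \<subseteq> homs G ?Q" using rh by (rule image_subsetI)
      show "inj_on r (homs G ?P)"
      proof (rule inj_onI)
        fix \<xi> \<eta> assume xi: "\<xi> \<in> homs G ?P" and eta: "\<eta> \<in> homs G ?P" and eq: "r \<xi> = r \<eta>"
        have isleq: "isl (\<xi> u) = isl (\<eta> u)" if "u \<in> verts G" for u
          using fun_cong[OF eq, of u] that by (auto simp: r_def split: if_splits)
        have V1eq: "V1 \<xi> = V1 \<eta>" and V2eq: "V2 \<xi> = V2 \<eta>"
          using isleq by (auto simp: V1_def V2_def)
        have "x1 \<xi> = x1 \<eta>"
        proof (cases "V1 \<xi> = {}")
          case True then show ?thesis using V1eq by (simp add: x1_def restrict_def)
        next
          case False
          have "g1 \<xi> = g1 \<eta>"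
          proof
            fix u show "g1 \<xi> u = g1 \<eta> u"
            proof (cases "u \<in> V1 \<xi>")
              case True
              then have "u \<in> verts G" "isl (\<xi> u)" "isl (\<eta> u)" using V1eq by (auto simp: V1_def)
              then show ?thesis using fun_cong[OF eq, of u] by (simp add: r_def)
            next
              case f: False
              then show ?thesis using homsD3[OF g1h[OF xi False]] homsD3[OF g1h[OF eta]] False V1eq
                by simp
            qed
          qed
          have inj: "inj_on (F1 (sub G (V1 \<xi>))) (homs (sub G (V1 \<xi>)) R1)"
            using F1inj[OF P1[OF False]] .
          have "x1 \<eta> \<in> homs (sub G (V1 \<xi>)) R1" using x1h[OF eta] V1eq by simp
          moreover have "F1 (sub G (V1 \<xi>)) (x1 \<xi>) = F1 (sub G (V1 \<xi>)) (x1 \<eta>)"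
            using \<open>g1 \<xi> = g1 \<eta>\<close> V1eq by (simp add: g1_def)
          ultimately show ?thesis using inj_onD[OF inj] x1h[OF xi] by blast
        qed
        moreover have "x2 \<xi> = x2 \<eta>"
        proof (cases "V2 \<xi> = {}")
          case True then show ?thesis using V2eq by (simp add: x2_def restrict_def)
        next
          case False
          have "g2 \<xi> = g2 \<eta>"
          proof
            fix u show "g2 \<xi> u = g2 \<eta> u"
            proof (cases "u \<in> V2 \<xi>")
              case True
              then have "u \<in> verts G" "\<not> isl (\<xi> u)" "\<not> isl (\<eta> u)" using V2eq by (auto simp: V2_def)
              then show ?thesis using fun_cong[OF eq, of u] by (simp add: r_def)
            next
              case f: False
              then show ?thesis using homsD3[OF g2h[OF xi False]] homsD3[OF g2h[OF eta]] False V2eq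
                by simp
            qed
          qed
          have inj: "inj_on (F2 (sub G (V2 \<xi>))) (homs (sub G (V2 \<xi>)) R2)"
            using F2inj[OF P2[OF False]] .
          have "x2 \<eta> \<in> homs (sub G (V2 \<xi>)) R2" using x2h[OF eta] V2eq by simp
          moreover have "F2 (sub G (V2 \<xi>)) (x2 \<xi>) = F2 (sub G (V2 \<xi>)) (x2 \<eta>)"
            using \<open>g2 \<xi> = g2 \<eta>\<close> V2eq by (simp add: g2_def)
          ultimately show ?thesis using inj_onD[OF inj] x2h[OF xi] by blast
        qed
        ultimately show "\<xi> = \<eta>"
        proof -
          assume e1: "x1 \<xi> = x1 \<eta>" and e2: "x2 \<xi> = x2 \<eta>"
          show ?thesis
          proof
            fix u show "\<xi> u = \<eta> u"
            proof (cases "u \<in> verts G")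
              case False then show ?thesis using homsD3[OF xi] homsD3[OF eta] by simp
            next
              case True
              then have "u \<in> V1 \<xi> \<or> u \<in> V2 \<xi>" by (auto simp: V1_def V2_def)
              then show ?thesis
              proof
                assume "u \<in> V1 \<xi>"
                then show ?thesis using c1[of u \<xi>] c1[of u \<eta>] e1 V1eq by simp
              next
                assume "u \<in> V2 \<xi>"
                then show ?thesis using c2[of u \<xi>] c2[of u \<eta>] e2 V2eq by simp
              qed
            qed
          qed
        qed
      qed
      show "\<forall>\<xi>\<in>homs G ?P. \<forall>v\<in>verts G. Gamma G (r \<xi>) v = Gamma G \<xi> v"
      proof (intro ballI)
        fix \<xi> v assume xi: "\<xi> \<in> homs G ?P" and v: "v \<in> verts G"
        show "Gamma G (r \<xi>) v = Gamma G \<xi> v"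
        proof (cases "isl (\<xi> v)")
          case True
          then have vV: "v \<in> V1 \<xi>" using v by (simp add: V1_def)
          then have ne: "V1 \<xi> \<noteq> {}" by blast
          have X: "{u \<in> verts G. r \<xi> u = r \<xi> v} = {u \<in> V1 \<xi>. g1 \<xi> u = g1 \<xi> v}"
            using True v by (auto simp: r_def V1_def split: if_splits)
          have Y: "{u \<in> verts G. \<xi> u = \<xi> v} = {u \<in> V1 \<xi>. x1 \<xi> u = x1 \<xi> v}"
          proof -
            have "u \<in> verts G \<and> \<xi> u = \<xi> v \<longleftrightarrow> u \<in> V1 \<xi> \<and> x1 \<xi> u = x1 \<xi> v" for u
              using c1[of u \<xi>] c1[OF vV] vV by (cases "u \<in> V1 \<xi>") (auto simp: V1_def)
            then show ?thesis by blast
          qed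
          have "Gamma G (r \<xi>) v = Gamma (sub G (V1 \<xi>)) (g1 \<xi>) v"
            unfolding Gamma_def X by (simp add: gamma_sub)
          also have "\<dots> = Gamma (sub G (V1 \<xi>)) (x1 \<xi>) v"
            unfolding g1_def using F1g[OF P1[OF ne] x1h[OF xi]] vV by simp
          also have "\<dots> = Gamma G \<xi> v"
            unfolding Gamma_def Y by (simp add: gamma_sub)
          finally show ?thesis .
        next
          case False
          then have vV: "v \<in> V2 \<xi>" using v by (simp add: V2_def)
          then have ne: "V2 \<xi> \<noteq> {}" by blast
          have X: "{u \<in> verts G. r \<xi> u = r \<xi> v} = {u \<in> V2 \<xi>. g2 \<xi> u = g2 \<xi> v}"
            using False v by (auto simp: r_def V2_def split: if_splits)
          have Y: "{u \<in> verts G. \<xi> u = \<xi> v} = {u \<in> V2 \<xi>. x2 \<xi> u = x2 \<xi> v}"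
          proof -
            have "u \<in> verts G \<and> \<xi> u = \<xi> v \<longleftrightarrow> u \<in> V2 \<xi> \<and> x2 \<xi> u = x2 \<xi> v" for u
              using c2[of u \<xi>] c2[OF vV] vV by (cases "u \<in> V2 \<xi>") (auto simp: V2_def)
            then show ?thesis by blast
          qed
          have "Gamma G (r \<xi>) v = Gamma (sub G (V2 \<xi>)) (g2 \<xi>) v"
            unfolding Gamma_def X by (simp add: gamma_sub)
          also have "\<dots> = Gamma (sub G (V2 \<xi>)) (x2 \<xi>) v"
            unfolding g2_def using F2g[OF P2[OF ne] x2h[OF xi]] vV by simp
          also have "\<dots> = Gamma G \<xi> v"
            unfolding Gamma_def Y by (simp add: gamma_sub)
          finally show ?thesis .
        qed
      qed
    qed
  qed
qed

end
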